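(* Let $f:[0,\infty)\to\mathbb{R}$ be convex with $f(1)=0$ and $G:[0,\mathsf{D_m}(f))\to[0,\infty)$ non-decreasing with $G(0)=0$, and suppose $(G,f)$ is divergence-subadditive. Let $p_X\ll q_X$ be distributions on a finite set $\mathcal{X}$. Consider testing $H_0: X^n\sim\prod_{i=1}^n p_X(x_i)$ against $H_1: X^n\sim\prod_{i=1}^n q_X(x_i)$ with a (possibly randomized) decision rule $U(X^n)\in\{0,1\}$, and let $\alpha=\Pr[U=1\mid H_0]$, $\beta=\Pr[U=1\mid H_1]$. Then $$G\big(D_f(\mathrm{Bern}(\alpha)\|\mathrm{Bern}(\beta))\big)\le n\,G\big(D_f(p_X\|q_X)\big).$$
   Context: For distributions $p\ll q$ on a finite set, $D_f(p\|q)=\sum_x q(x) f(p(x)/q(x))$ with $0f(0/0)=0$; $\mathsf{D_m}(f)=f(0)+\lim_{t\to\infty}f(t)/t$. $\mathrm{Bern}(a)$ is the distribution on $\{0,1\}$ assigning probability $a$ to $1$. $(G,f)$ is divergence-subadditive if for all finite sets $\mathcal{Y},\mathcal{Z}$ and distributions $q_Y\ll r_Y$, $q_Z\ll r_Z$: $G(D_f(q_Yq_Z\|r_Yr_Z))\le G(D_f(q_Y\|r_Y))+G(D_f(q_Z\|r_Z))$. *)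

theory Defs
  imports "HOL-Analysis.Analysis"
begin

definition is_dist :: "'a set \<Rightarrow> ('a \<Rightarrow> real) \<Rightarrow> bool" where
  "is_dist A p \<longleftrightarrow> finite A \<and> (\<forall>x\<in>A. 0 \<le> p x) \<and> sum p A = 1"

definition abs_cont :: "'a set \<Rightarrow> ('a \<Rightarrow> real) \<Rightarrow> ('a \<Rightarrow> real) \<Rightarrow> bool" where
  "abs_cont A p q \<longleftrightarrow> (\<forall>x\<in>A. q x = 0 \<longrightarrow> p x = 0)"

text \<open>f-divergence D_f(p||q) = sum_x q(x) f(p(x)/q(x)), with the convention 0 f(0/0) = 0
  (terms with q x = 0 are dropped; under p << q these have p x = 0).\<close>
definition Df :: "(real \<Rightarrow> real) \<Rightarrow> 'a set \<Rightarrow> ('a \<Rightarrow> real) \<Rightarrow> ('a \<Rightarrow> real) \<Rightarrow> real" where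
  "Df f A p q = (\<Sum>x\<in>{x\<in>A. q x \<noteq> 0}. q x * f (p x / q x))"

definition Dm :: "(real \<Rightarrow> real) \<Rightarrow> ereal" where
  "Dm f = ereal (f 0) + Lim at_top (\<lambda>t. ereal (f t / t))"

definition bern :: "real \<Rightarrow> nat \<Rightarrow> real" where
  "bern a k = (if k = 1 then a else 1 - a)"

text \<open>Divergence-subadditivity. The finite alphabets Y, Z are taken as finite subsets of nat;
  since D_f is invariant under relabelling, this covers all finite sets.\<close>
definition div_subadditive :: "(real \<Rightarrow> real) \<Rightarrow> (real \<Rightarrow> real) \<Rightarrow> bool" where
  "div_subadditive G f \<longleftrightarrow>
     (\<forall>(Y::nat set) (Z::nat set) qY rY qZ rZ.
        is_dist Y qY \<and> is_dist Y rY \<and> abs_cont Y qY rY \<and>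
        is_dist Z qZ \<and> is_dist Z rZ \<and> abs_cont Z qZ rZ \<longrightarrow>
        G (Df f (Y \<times> Z) (\<lambda>(y, z). qY y * qZ z) (\<lambda>(y, z). rY y * rZ z))
          \<le> G (Df f Y qY rY) + G (Df f Z qZ rZ))"

text \<open>Probability that the randomized test u (u xs = Pr[U = 1 | X^n = xs]) outputs 1
  when X^n is i.i.d. with marginal p.\<close>
definition test_prob :: "nat \<Rightarrow> ('x \<Rightarrow> real) \<Rightarrow> ('x list \<Rightarrow> real) \<Rightarrow> real" where
  "test_prob n p u = (\<Sum>xs\<in>{xs. length xs = n}. prod_list (map p xs) * u xs)"

end

theory Submission
  imports Defs
begin


lemma chord:
  assumes cf: "convex_on {0..} f" and t: "0 \<le> t" "t \<le> T" and T: "0 < T"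
  shows "f t \<le> f 0 + t * ((f T - f 0) / T)"
proof -
  have "f ((1 - t/T) *\<^sub>R 0 + (t/T) *\<^sub>R T) \<le> (1 - t/T) * f 0 + (t/T) * f T"
    by (rule convex_onD[OF cf]) (use t T in auto)
  moreover have "(1 - t/T) *\<^sub>R 0 + (t/T) *\<^sub>R T = t" using T by simp
  ultimately show ?thesis using T by (simp add: field_simps)
qed

lemma below:
  assumes cf: "convex_on {0..} f" and t: "0 \<le> t" "t \<le> T" and T: "0 < T"
    and e1: "f T = f 0 + s * T" and e2: "f (2*T) = f 0 + s * (2*T)"
  shows "f 0 + s * t \<le> f t"
proof -
  define l where "l = T / (2*T - t)"
  have l: "0 < l" "l \<le> 1" using t T by (auto simp: l_def field_simps)
  have "f ((1 - l) *\<^sub>R (2*T) + l *\<^sub>R t) \<le> (1 - l) * f (2*T) + l * f t"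
    by (rule convex_onD[OF cf]) (use t T l in auto)
  moreover have "(1 - l) *\<^sub>R (2*T) + l *\<^sub>R t = T"
  proof -
    have "l * (2*T - t) = T" using t T by (simp add: l_def)
    thus ?thesis by (simp add: algebra_simps)
  qed
  ultimately have "f T \<le> (1 - l) * f (2*T) + l * f t" by simp
  hence H: "f 0 + s * T \<le> (1 - l) * (f 0 + s * (2*T)) + l * f t" unfolding e1 e2 .
  have lt: "l * (2*T - t) = T" using t T by (simp add: l_def)
  have "(1 - l) * (f 0 + s * (2*T)) + l * f t = f 0 + s*T + l * f t - l * f 0 - s * t * l - s * (l * (2*T - t) - T)"
    by (simp add: algebra_simps)
  with H lt have "l * (f 0 + s * t) \<le> l * f t" by (simp add: algebra_simps)
  thus ?thesis using l by simp
qed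

lemma Dm_lower:
  assumes cf: "convex_on {0..} f" and t0: "0 < t0"
  shows "ereal (f 0 + (f t0 - f 0) / t0) \<le> Dm f"
proof -
  define g where "g t = (f t - f 0) / t" for t
  have gm: "g a \<le> g b" if "0 < a" "a \<le> b" for a b
    using chord[OF cf, of a b] that by (simp add: g_def field_simps)
  define L where "L = (SUP t\<in>{0<..}. ereal (g t))"
  have gL: "ereal (g t) \<le> L" if "0 < t" for t
    unfolding L_def using that by (intro SUP_upper) auto
  have tg: "((\<lambda>t. ereal (g t)) \<longlongrightarrow> L) at_top"
  proof (rule order_tendstoI)
    fix a assume "a < L"
    then obtain t where t: "t \<in> {0<..}" "a < ereal (g t)"
      unfolding L_def by (auto simp: less_SUP_iff)
    show "\<forall>\<^sub>F x in at_top. a < ereal (g x)"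
      using eventually_ge_at_top[of t]
      by eventually_elim (use t gm in \<open>auto intro: less_le_trans\<close>)
  next
    fix a assume "L < a"
    show "\<forall>\<^sub>F x in at_top. ereal (g x) < a"
      using eventually_gt_at_top[of 0]
      by eventually_elim (use gL \<open>L < a\<close> in \<open>auto intro: le_less_trans\<close>)
  qed
  have t0': "((\<lambda>t. ereal (f 0 / t)) \<longlongrightarrow> ereal 0) at_top"
    by (intro tendsto_ereal tendsto_divide_0[OF tendsto_const] filterlim_at_top_imp_at_infinity filterlim_ident)
  have Lm: "L \<noteq> -\<infinity>" using gL[OF t0] by auto
  have "((\<lambda>t. ereal (g t) + ereal (f 0 / t)) \<longlongrightarrow> L) at_top"
    using tendsto_add_ereal_general[OF _ tg t0'] Lm by simp
  hence "((\<lambda>t. ereal (f t / t)) \<longlongrightarrow> L) at_top"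
  proof (rule Lim_transform_eventually)
    show "\<forall>\<^sub>F x in at_top. ereal (g x) + ereal (f 0 / x) = ereal (f x / x)"
      using eventually_gt_at_top[of 0]
      by eventually_elim (simp add: g_def field_simps)
  qed
  hence "Lim at_top (\<lambda>t. ereal (f t / t)) = L" by (intro tendsto_Lim) auto
  hence "Dm f = ereal (f 0) + L" by (simp add: Dm_def)
  moreover have "ereal (f 0 + g t0) \<le> ereal (f 0) + L"
    using add_left_mono[OF gL[OF t0], of "ereal (f 0)"] by simp
  ultimately show ?thesis by (simp add: g_def)
qed


lemma persp:
  assumes cf: "convex_on {0..} f" and A: "finite A"
    and w: "\<And>x. x \<in> A \<Longrightarrow> 0 \<le> w x" and p: "\<And>x. x \<in> A \<Longrightarrow> 0 \<le> p x"
    and q: "\<And>x. x \<in> A \<Longrightarrow> 0 \<le> q x" and ac: "\<And>x. x \<in> A \<Longrightarrow> q x = 0 \<Longrightarrow> p x = 0"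
    and Q: "(\<Sum>x\<in>A. w x * q x) \<noteq> 0"
  shows "(\<Sum>x\<in>A. w x * q x) * f ((\<Sum>x\<in>A. w x * p x) / (\<Sum>x\<in>A. w x * q x))
     \<le> (\<Sum>x\<in>{x\<in>A. q x \<noteq> 0}. w x * q x * f (p x / q x))"
proof -
  define Q where "Q = (\<Sum>x\<in>A. w x * q x)"
  have "Q \<ge> 0" unfolding Q_def using w q by (intro sum_nonneg mult_nonneg_nonneg) auto
  hence Qp: "Q > 0" using Q unfolding Q_def by linarith
  define S where "S = {x\<in>A. w x * q x \<noteq> 0}"
  have S: "finite S" "S \<subseteq> A" using A by (auto simp: S_def)
  have QS: "Q = (\<Sum>x\<in>S. w x * q x)" unfolding Q_def S_def
    by (rule sum.mono_neutral_right) (use A in auto)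
  have Sne: "S \<noteq> {}" using QS Qp by auto
  have PS: "(\<Sum>x\<in>A. w x * p x) = (\<Sum>x\<in>S. w x * p x)" unfolding S_def
    by (rule sum.mono_neutral_right) (use A ac in auto)
  have J: "f (\<Sum>x\<in>S. (w x * q x / Q) *\<^sub>R (p x / q x)) \<le> (\<Sum>x\<in>S. (w x * q x / Q) * f (p x / q x))"
  proof (rule convex_on_sum[OF S(1) Sne cf])
    show "(\<Sum>x\<in>S. w x * q x / Q) = 1" using QS Qp by (simp add: sum_divide_distrib[symmetric])
    show "\<And>i. i \<in> S \<Longrightarrow> 0 \<le> w i * q i / Q" using S w q Qp by auto
    show "\<And>i. i \<in> S \<Longrightarrow> p i / q i \<in> {0..}" using S p q by auto
  qed
  have J1: "(\<Sum>x\<in>S. (w x * q x / Q) *\<^sub>R (p x / q x)) = (\<Sum>x\<in>S. w x * p x) / Q"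
    unfolding sum_divide_distrib by (rule sum.cong) (auto simp: S_def)
  have J2: "(\<Sum>x\<in>S. (w x * q x / Q) * f (p x / q x)) = (\<Sum>x\<in>S. w x * q x * f (p x / q x)) / Q"
    unfolding sum_divide_distrib by (rule sum.cong) auto
  have "f ((\<Sum>x\<in>A. w x * p x) / Q) \<le> (\<Sum>x\<in>S. w x * q x * f (p x / q x)) / Q"
    using J unfolding J1 J2 PS .
  hence "Q * f ((\<Sum>x\<in>A. w x * p x) / Q) \<le> (\<Sum>x\<in>S. w x * q x * f (p x / q x))"
    using Qp by (simp add: field_simps)
  moreover have "(\<Sum>x\<in>S. w x * q x * f (p x / q x)) = (\<Sum>x\<in>{x\<in>A. q x \<noteq> 0}. w x * q x * f (p x / q x))"
    unfolding S_def by (rule sum.mono_neutral_left) (use A in auto)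
  ultimately show ?thesis unfolding Q_def by simp
qed

lemma Df_nonneg:
  assumes cf: "convex_on {0..} f" and f1: "f 1 = 0"
    and "is_dist A p" "is_dist A q" "abs_cont A p q"
  shows "0 \<le> Df f A p q"
  using persp[OF cf, of A "\<lambda>_. 1" p q] assms
  unfolding is_dist_def abs_cont_def Df_def by auto


lemma Df_lt_Dm:
  assumes cf: "convex_on {0..} f" and f1: "f 1 = 0"
    and dp: "is_dist A p" and dq: "is_dist A q" and ac: "abs_cont A p q"
  shows "Df f A p q = 0 \<or> ereal (Df f A p q) < Dm f"
proof -
  define S where "S = {x\<in>A. q x \<noteq> 0}"
  have A: "finite A" using dp by (simp add: is_dist_def)
  have S: "finite S" "S \<subseteq> A" using A by (auto simp: S_def)
  have p0: "\<And>x. x\<in>A \<Longrightarrow> 0 \<le> p x" and q0: "\<And>x. x\<in>A \<Longrightarrow> 0 \<le> q x"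
    using dp dq by (auto simp: is_dist_def)
  have "(\<Sum>x\<in>S. q x) = (\<Sum>x\<in>A. q x)" unfolding S_def
    by (rule sum.mono_neutral_left) (use A in auto)
  hence sq: "(\<Sum>x\<in>S. q x) = 1" using dq unfolding is_dist_def by simp
  have "(\<Sum>x\<in>S. p x) = (\<Sum>x\<in>A. p x)" unfolding S_def
    by (rule sum.mono_neutral_left) (use A ac in \<open>auto simp: abs_cont_def\<close>)
  hence sp: "(\<Sum>x\<in>S. p x) = 1" using dp unfolding is_dist_def by simp
  define T where "T = 1 + (\<Sum>x\<in>S. p x / q x)"
  have rT: "0 \<le> p x / q x \<and> p x / q x \<le> T" if "x \<in> S" for x
  proof -
    have "p x / q x \<le> (\<Sum>x\<in>S. p x / q x)"
      by (rule member_le_sum) (use that S p0 q0 in auto)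
    thus ?thesis using that S p0 q0 by (auto simp: T_def)
  qed
  have T1: "1 \<le> T" unfolding T_def using S p0 q0 by (auto intro!: sum_nonneg)
  define s where "s = (f T - f 0) / T"
  define s' where "s' = (f (2*T) - f 0) / (2*T)"
  have Dfe: "Df f A p q = (\<Sum>x\<in>S. q x * f (p x / q x))" by (simp add: Df_def S_def)
  have lin: "(\<Sum>x\<in>S. q x * (f 0 + (p x / q x) * c)) = f 0 + c" for c
  proof -
    have "(\<Sum>x\<in>S. q x * (f 0 + (p x / q x) * c)) = (\<Sum>x\<in>S. q x * f 0 + p x * c)"
      by (rule sum.cong) (auto simp: S_def field_simps)
    also have "\<dots> = f 0 + c" using sq sp by (simp add: sum.distrib sum_distrib_right[symmetric])
    finally show ?thesis .
  qed
  have up: "Df f A p q \<le> f 0 + s"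
  proof -
    have "Df f A p q \<le> (\<Sum>x\<in>S. q x * (f 0 + (p x / q x) * s))" unfolding Dfe
    proof (rule sum_mono)
      fix x assume x: "x \<in> S"
      have "f (p x / q x) \<le> f 0 + (p x / q x) * s"
        using chord[OF cf, of "p x / q x" T] rT[OF x] T1 by (simp add: s_def)
      thus "q x * f (p x / q x) \<le> q x * (f 0 + (p x / q x) * s)"
        using q0[of x] x S by (intro mult_left_mono) auto
    qed
    thus ?thesis using lin by simp
  qed
  have ss': "f T \<le> f 0 + T * s'" using chord[OF cf, of T "2*T"] T1 by (simp add: s'_def)
  have DmL: "ereal (f 0 + s') \<le> Dm f" using Dm_lower[OF cf, of "2*T"] T1 by (simp add: s'_def)
  show ?thesis
  proof (cases "f T < f 0 + T * s'")
    case True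
    hence "s < s'" using T1 by (simp add: s_def field_simps)
    hence "ereal (Df f A p q) < ereal (f 0 + s')" using up by simp
    thus ?thesis using DmL by (meson less_le_trans)
  next
    case False
    hence e1: "f T = f 0 + s' * T" using ss' by (simp add: algebra_simps)
    have e2: "f (2*T) = f 0 + s' * (2*T)" using T1 by (simp add: s'_def)
    have lo: "f 0 + s' * t \<le> f t" if "0 \<le> t" "t \<le> T" for t
      by (rule below[OF cf that _ e1 e2]) (use T1 in auto)
    have eqT: "f t = f 0 + t * s'" if "0 \<le> t" "t \<le> T" for t
      using lo[OF that] chord[OF cf that, of] T1 e1 by (simp add: algebra_simps)
    have "f 1 = f 0 + s'" using eqT[of 1] T1 by simp
    hence "f 0 + s' = 0" using f1 by simp
    have "Df f A p q = (\<Sum>x\<in>S. q x * (f 0 + (p x / q x) * s'))" unfolding Dfe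
      by (rule sum.cong) (use rT eqT in auto)
    thus ?thesis using lin \<open>f 0 + s' = 0\<close> by simp
  qed
qed



lemma Df_reindex:
  assumes h: "bij_betw h A B"
  shows "Df f A (\<lambda>a. p (h a)) (\<lambda>a. q (h a)) = Df f B p q"
proof -
  have "bij_betw h {a\<in>A. q (h a) \<noteq> 0} {b\<in>B. q b \<noteq> 0}"
  proof (rule bij_betw_subset[OF h])
    show "h ` {a \<in> A. q (h a) \<noteq> 0} = {b \<in> B. q b \<noteq> 0}"
      using bij_betw_imp_surj_on[OF h] by auto
  qed auto
  thus ?thesis unfolding Df_def by (rule sum.reindex_bij_betw)
qed

lemma is_dist_reindex:
  assumes h: "bij_betw h A B"
  shows "is_dist A (\<lambda>a. p (h a)) \<longleftrightarrow> is_dist B p"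
proof -
  have "finite A \<longleftrightarrow> finite B" using bij_betw_finite[OF h] .
  moreover have "(\<forall>x\<in>A. 0 \<le> p (h x)) \<longleftrightarrow> (\<forall>x\<in>B. 0 \<le> p x)"
    using bij_betw_imp_surj_on[OF h] by auto
  moreover have "sum (\<lambda>a. p (h a)) A = sum p B" by (rule sum.reindex_bij_betw[OF h])
  ultimately show ?thesis unfolding is_dist_def by simp
qed

lemma abs_cont_reindex:
  assumes h: "bij_betw h A B"
  shows "abs_cont A (\<lambda>a. p (h a)) (\<lambda>a. q (h a)) \<longleftrightarrow> abs_cont B p q"
  using bij_betw_imp_surj_on[OF h] unfolding abs_cont_def by auto

lemma subadd_gen:
  fixes Y :: "'a set" and Z :: "'b set"
  assumes sa: "div_subadditive G f"
    and dY: "is_dist Y qY" "is_dist Y rY" "abs_cont Y qY rY"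
    and dZ: "is_dist Z qZ" "is_dist Z rZ" "abs_cont Z qZ rZ"
  shows "G (Df f (Y \<times> Z) (\<lambda>(y, z). qY y * qZ z) (\<lambda>(y, z). rY y * rZ z))
          \<le> G (Df f Y qY rY) + G (Df f Z qZ rZ)"
proof -
  obtain hY where hY: "bij_betw hY {0..<card Y} Y"
    using ex_bij_betw_nat_finite dY(1) unfolding is_dist_def by blast
  obtain hZ where hZ: "bij_betw hZ {0..<card Z} Z"
    using ex_bij_betw_nat_finite dZ(1) unfolding is_dist_def by blast
  have hP: "bij_betw (map_prod hY hZ) ({0..<card Y} \<times> {0..<card Z}) (Y \<times> Z)"
    by (rule bij_betw_map_prod[OF hY hZ])
  have "G (Df f ({0..<card Y} \<times> {0..<card Z}) (\<lambda>(y, z). qY (hY y) * qZ (hZ z)) (\<lambda>(y, z). rY (hY y) * rZ (hZ z)))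
     \<le> G (Df f {0..<card Y} (\<lambda>a. qY (hY a)) (\<lambda>a. rY (hY a))) + G (Df f {0..<card Z} (\<lambda>a. qZ (hZ a)) (\<lambda>a. rZ (hZ a)))"
    apply (rule sa[unfolded div_subadditive_def, rule_format, of "{0..<card Y}" "\<lambda>a. qY (hY a)" "\<lambda>a. rY (hY a)" "{0..<card Z}" "\<lambda>a. qZ (hZ a)" "\<lambda>a. rZ (hZ a)"])
    using dY dZ
    unfolding is_dist_reindex[OF hY] is_dist_reindex[OF hZ]
    abs_cont_reindex[OF hY] abs_cont_reindex[OF hZ]
    by simp
  moreover have "Df f ({0..<card Y} \<times> {0..<card Z}) (\<lambda>(y, z). qY (hY y) * qZ (hZ z)) (\<lambda>(y, z). rY (hY y) * rZ (hZ z))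
     = Df f (Y \<times> Z) (\<lambda>(y, z). qY y * qZ z) (\<lambda>(y, z). rY y * rZ z)"
  proof -
    have e1: "(\<lambda>(y, z). qY (hY y) * qZ (hZ z)) = (\<lambda>a. (\<lambda>(y, z). qY y * qZ z) (map_prod hY hZ a))"
      by auto
    have e2: "(\<lambda>(y, z). rY (hY y) * rZ (hZ z)) = (\<lambda>a. (\<lambda>(y, z). rY y * rZ z) (map_prod hY hZ a))"
      by auto
    show ?thesis unfolding e1 e2 by (rule Df_reindex[OF hP])
  qed
  ultimately show ?thesis
    by (simp add: Df_reindex[OF hY] Df_reindex[OF hZ])
qed

lemma bij_cons: "bij_betw (\<lambda>(xs, x). x # xs) ({xs. length xs = k} \<times> UNIV) {xs. length xs = Suc k}"
  by (rule bij_betw_byWitness[where f' = "\<lambda>ys. (tl ys, hd ys)"])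
     (auto simp: length_Suc_conv)

lemma fin_lists: "finite {xs :: 'x::finite list. length xs = n}"
  using finite_lists_length_eq[of "UNIV :: 'x set" n] by simp

lemma lists_dist:
  fixes p :: "'x::finite \<Rightarrow> real"
  assumes "is_dist UNIV p"
  shows "is_dist {xs. length xs = n} (\<lambda>xs. prod_list (map p xs))"
proof (induction n)
  case 0
  have "{xs :: 'x list. length xs = 0} = {[]}" by auto
  thus ?case by (simp add: is_dist_def)
next
  case (Suc k)
  have "is_dist ({xs. length xs = k} \<times> UNIV) (\<lambda>(xs, x). prod_list (map p xs) * p x)"
    using Suc assms unfolding is_dist_def
    by (auto simp: sum.cartesian_product[symmetric] sum_distrib_left[symmetric] sum_distrib_right[symmetric]
        intro!: mult_nonneg_nonneg)
  moreover have "(\<lambda>(xs, x). prod_list (map p xs) * p x) = (\<lambda>a. prod_list (map p ((\<lambda>(xs, x). x # xs) a)))"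
    by (auto simp: fun_eq_iff)
  ultimately show ?case using is_dist_reindex[OF bij_cons[of k], where p="\<lambda>xs. prod_list (map p xs)"] by simp
qed

lemma lists_ac:
  fixes p q :: "'x::finite \<Rightarrow> real"
  assumes "abs_cont UNIV p q"
  shows "abs_cont {xs. length xs = n} (\<lambda>xs. prod_list (map p xs)) (\<lambda>xs. prod_list (map q xs))"
  using assms unfolding abs_cont_def by (auto simp: prod_list_zero_iff)



definition TT :: "(real \<Rightarrow> real) \<Rightarrow> real \<Rightarrow> real \<Rightarrow> real" where
  "TT f a b = (if b = 0 then 0 else b * f (a / b))"

lemma persp2:
  assumes cf: "convex_on {0..} f" and A: "finite A"
    and w: "\<And>x. x \<in> A \<Longrightarrow> 0 \<le> w x" and p: "\<And>x. x \<in> A \<Longrightarrow> 0 \<le> p x"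
    and q: "\<And>x. x \<in> A \<Longrightarrow> 0 \<le> q x" and ac: "\<And>x. x \<in> A \<Longrightarrow> q x = 0 \<Longrightarrow> p x = 0"
  shows "TT f (\<Sum>x\<in>A. w x * p x) (\<Sum>x\<in>A. w x * q x)
     \<le> (\<Sum>x\<in>{x\<in>A. q x \<noteq> 0}. w x * q x * f (p x / q x))"
proof (cases "(\<Sum>x\<in>A. w x * q x) = 0")
  case True
  have "\<forall>x\<in>A. w x * q x = 0"
    using True sum_nonneg_eq_0_iff[OF A, of "\<lambda>x. w x * q x"] w q by auto
  hence "(\<Sum>x\<in>{x\<in>A. q x \<noteq> 0}. w x * q x * f (p x / q x)) = 0"
    by (intro sum.neutral) auto
  thus ?thesis using True by (simp add: TT_def)
next
  case False
  thus ?thesis using persp[OF cf A w p q ac False] by (simp add: TT_def)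
qed

lemma dpi:
  assumes cf: "convex_on {0..} f"
    and dP: "is_dist A P" and dQ: "is_dist A Q" and ac: "abs_cont A P Q"
    and u: "\<And>x. x \<in> A \<Longrightarrow> 0 \<le> u x \<and> u x \<le> 1"
  shows "Df f {0, 1} (bern (\<Sum>x\<in>A. P x * u x)) (bern (\<Sum>x\<in>A. Q x * u x)) \<le> Df f A P Q"
proof -
  define \<alpha> where "\<alpha> = (\<Sum>x\<in>A. P x * u x)"
  define \<beta> where "\<beta> = (\<Sum>x\<in>A. Q x * u x)"
  have A: "finite A" using dP by (simp add: is_dist_def)
  have P0: "\<And>x. x \<in> A \<Longrightarrow> 0 \<le> P x" and Q0: "\<And>x. x \<in> A \<Longrightarrow> 0 \<le> Q x"
    and sP: "sum P A = 1" and sQ: "sum Q A = 1" using dP dQ by (auto simp: is_dist_def)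
  have ac': "\<And>x. x \<in> A \<Longrightarrow> Q x = 0 \<Longrightarrow> P x = 0" using ac by (auto simp: abs_cont_def)
  have "Df f {0, 1} (bern \<alpha>) (bern \<beta>) = (\<Sum>k\<in>{0::nat, 1}. if bern \<beta> k \<noteq> 0 then bern \<beta> k * f (bern \<alpha> k / bern \<beta> k) else 0)"
    unfolding Df_def by (rule sum.inter_filter) simp
  also have "\<dots> = TT f \<alpha> \<beta> + TT f (1 - \<alpha>) (1 - \<beta>)"
    by (simp add: bern_def TT_def)
  finally have Db: "Df f {0, 1} (bern \<alpha>) (bern \<beta>) = TT f \<alpha> \<beta> + TT f (1 - \<alpha>) (1 - \<beta>)" .
  have a1: "\<alpha> = (\<Sum>x\<in>A. u x * P x)" "\<beta> = (\<Sum>x\<in>A. u x * Q x)"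
    by (simp_all add: \<alpha>_def \<beta>_def mult.commute)
  have a2: "1 - \<alpha> = (\<Sum>x\<in>A. (1 - u x) * P x)" "1 - \<beta> = (\<Sum>x\<in>A. (1 - u x) * Q x)"
    by (simp_all add: \<alpha>_def \<beta>_def algebra_simps sum_subtractf sP sQ)
  have t1: "TT f \<alpha> \<beta> \<le> (\<Sum>x\<in>{x\<in>A. Q x \<noteq> 0}. u x * Q x * f (P x / Q x))"
    unfolding a1 by (rule persp2[OF cf A]) (use u P0 Q0 ac' in auto)
  have t2: "TT f (1 - \<alpha>) (1 - \<beta>) \<le> (\<Sum>x\<in>{x\<in>A. Q x \<noteq> 0}. (1 - u x) * Q x * f (P x / Q x))"
    unfolding a2 by (rule persp2[OF cf A]) (use u P0 Q0 ac' in auto)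
  have "Df f A P Q = (\<Sum>x\<in>{x\<in>A. Q x \<noteq> 0}. u x * Q x * f (P x / Q x)) + (\<Sum>x\<in>{x\<in>A. Q x \<noteq> 0}. (1 - u x) * Q x * f (P x / Q x))"
    unfolding Df_def sum.distrib[symmetric] by (rule sum.cong) (auto simp: algebra_simps)
  thus ?thesis using Db t1 t2 unfolding \<alpha>_def \<beta>_def by linarith
qed

lemma G_lists:
  fixes p q :: "'x::finite \<Rightarrow> real"
  assumes sa: "div_subadditive G f" and G0: "G 0 = 0" and f1: "f 1 = 0"
    and dp: "is_dist UNIV p" and dq: "is_dist UNIV q" and ac: "abs_cont UNIV p q"
  shows "G (Df f {xs. length xs = n} (\<lambda>xs. prod_list (map p xs)) (\<lambda>xs. prod_list (map q xs)))
    \<le> real n * G (Df f UNIV p q)"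
proof (induction n)
  case 0
  have "{xs :: 'x list. length xs = 0} = {[]}" by auto
  thus ?case using G0 f1 by (simp add: Df_def)
next
  case (Suc k)
  have e: "(\<lambda>(xs, x). prod_list (map r xs) * r x) = (\<lambda>a. prod_list (map r ((\<lambda>(xs, x). x # xs) a)))"
    for r :: "'x \<Rightarrow> real" by (auto simp: fun_eq_iff)
  have "Df f {xs. length xs = Suc k} (\<lambda>xs. prod_list (map p xs)) (\<lambda>xs. prod_list (map q xs))
     = Df f ({xs. length xs = k} \<times> UNIV) (\<lambda>(xs, x). prod_list (map p xs) * p x) (\<lambda>(xs, x). prod_list (map q xs) * q x)"
    unfolding e by (rule Df_reindex[OF bij_cons, symmetric])
  hence "G (Df f {xs. length xs = Suc k} (\<lambda>xs. prod_list (map p xs)) (\<lambda>xs. prod_list (map q xs)))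
     \<le> G (Df f {xs. length xs = k} (\<lambda>xs. prod_list (map p xs)) (\<lambda>xs. prod_list (map q xs))) + G (Df f UNIV p q)"
    using subadd_gen[OF sa lists_dist[OF dp] lists_dist[OF dq] lists_ac[OF ac] dp dq ac] by simp
  thus ?case using Suc by (simp add: algebra_simps)
qed



lemma zero_transfer:
  fixes p q w :: "'a \<Rightarrow> real"
  assumes A: "finite A" and w: "\<And>x. x \<in> A \<Longrightarrow> 0 \<le> w x"
    and q: "\<And>x. x \<in> A \<Longrightarrow> 0 \<le> q x" and ac: "\<And>x. x \<in> A \<Longrightarrow> q x = 0 \<Longrightarrow> p x = 0"
    and z: "(\<Sum>x\<in>A. q x * w x) = 0"
  shows "(\<Sum>x\<in>A. p x * w x) = 0"
proof -
  have "\<forall>x\<in>A. q x * w x = 0"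
    using z sum_nonneg_eq_0_iff[OF A, of "\<lambda>x. q x * w x"] w q by auto
  thus ?thesis using ac by (intro sum.neutral) auto
qed

lemma bern_ok:
  assumes dP: "is_dist A P" and dQ: "is_dist A Q" and ac: "abs_cont A P Q"
    and u: "\<And>x. x \<in> A \<Longrightarrow> 0 \<le> u x \<and> u x \<le> 1"
  shows "is_dist {0, 1} (bern (\<Sum>x\<in>A. P x * u x))" "is_dist {0, 1} (bern (\<Sum>x\<in>A. Q x * u x))"
    "abs_cont {0, 1} (bern (\<Sum>x\<in>A. P x * u x)) (bern (\<Sum>x\<in>A. Q x * u x))"
proof -
  have A: "finite A" using dP by (simp add: is_dist_def)
  have P0: "\<And>x. x \<in> A \<Longrightarrow> 0 \<le> P x" and Q0: "\<And>x. x \<in> A \<Longrightarrow> 0 \<le> Q x"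
    and sP: "sum P A = 1" and sQ: "sum Q A = 1" using dP dQ by (auto simp: is_dist_def)
  have ac': "\<And>x. x \<in> A \<Longrightarrow> Q x = 0 \<Longrightarrow> P x = 0" using ac by (auto simp: abs_cont_def)
  have rng: "0 \<le> (\<Sum>x\<in>A. R x * u x) \<and> (\<Sum>x\<in>A. R x * u x) \<le> 1"
    if R0: "\<And>x. x \<in> A \<Longrightarrow> 0 \<le> R x" and sR: "sum R A = 1" for R
  proof
    show "0 \<le> (\<Sum>x\<in>A. R x * u x)" using R0 u by (intro sum_nonneg) auto
    have "(\<Sum>x\<in>A. R x * u x) \<le> (\<Sum>x\<in>A. R x)"
      using R0 u by (intro sum_mono) (simp add: mult_left_le)
    thus "(\<Sum>x\<in>A. R x * u x) \<le> 1" using sR by simp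
  qed
  show "is_dist {0, 1} (bern (\<Sum>x\<in>A. P x * u x))" using rng[OF P0 sP]
    by (auto simp: is_dist_def bern_def)
  show "is_dist {0, 1} (bern (\<Sum>x\<in>A. Q x * u x))" using rng[OF Q0 sQ]
    by (auto simp: is_dist_def bern_def)
  have z1: "(\<Sum>x\<in>A. P x * u x) = 0" if "(\<Sum>x\<in>A. Q x * u x) = 0"
    by (rule zero_transfer[OF A _ Q0 ac' that]) (use u in auto)
  have c1: "(\<Sum>x\<in>A. R x * (1 - u x)) = 1 - (\<Sum>x\<in>A. R x * u x)" if "sum R A = 1" for R
    using that by (simp add: algebra_simps sum_subtractf)
  have z2: "1 - (\<Sum>x\<in>A. P x * u x) = 0" if "1 - (\<Sum>x\<in>A. Q x * u x) = 0"
    using zero_transfer[OF A _ Q0 ac', of "\<lambda>x. 1 - u x"] that u c1[OF sP] c1[OF sQ] by auto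
  show "abs_cont {0, 1} (bern (\<Sum>x\<in>A. P x * u x)) (bern (\<Sum>x\<in>A. Q x * u x))"
    using z1 z2 by (auto simp: abs_cont_def bern_def)
qed

theorem theorem6:
  fixes f G :: "real \<Rightarrow> real"
    and pX qX :: "'x::finite \<Rightarrow> real"
    and u :: "'x list \<Rightarrow> real"
    and n :: nat
  assumes "convex_on {0..} f"
    and "f 1 = 0"
    and "mono_on {x. 0 \<le> x \<and> ereal x < Dm f} G"
    and "\<forall>x. 0 \<le> x \<and> ereal x < Dm f \<longrightarrow> 0 \<le> G x"
    and "G 0 = 0"
    and "div_subadditive G f"
    and "is_dist UNIV pX" and "is_dist UNIV qX" and "abs_cont UNIV pX qX"
    and "\<forall>xs. length xs = n \<longrightarrow> 0 \<le> u xs \<and> u xs \<le> 1"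
  shows "G (Df f {0, 1} (bern (test_prob n pX u)) (bern (test_prob n qX u)))
           \<le> real n * G (Df f UNIV pX qX)"
proof -
  note cf = assms(1) and f1 = assms(2) and mo = assms(3) and G0 = assms(5) and sa = assms(6)
  define L where "L = {xs :: 'x list. length xs = n}"
  define P where "P = (\<lambda>xs. prod_list (map pX xs))"
  define Q where "Q = (\<lambda>xs. prod_list (map qX xs))"
  have dP: "is_dist L P" unfolding L_def P_def by (rule lists_dist[OF assms(7)])
  have dQ: "is_dist L Q" unfolding L_def Q_def by (rule lists_dist[OF assms(8)])
  have ac: "abs_cont L P Q" unfolding L_def P_def Q_def by (rule lists_ac[OF assms(9)])
  have u: "\<And>x. x \<in> L \<Longrightarrow> 0 \<le> u x \<and> u x \<le> 1" using assms(10) by (auto simp: L_def)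
  have tp: "test_prob n r u = (\<Sum>x\<in>L. prod_list (map r x) * u x)" for r :: "'x \<Rightarrow> real"
    by (simp add: test_prob_def L_def)
  have tpP: "test_prob n pX u = (\<Sum>x\<in>L. P x * u x)" by (simp add: tp P_def)
  have tpQ: "test_prob n qX u = (\<Sum>x\<in>L. Q x * u x)" by (simp add: tp Q_def)
  define Db where "Db = Df f {0, 1} (bern (test_prob n pX u)) (bern (test_prob n qX u))"
  define DL where "DL = Df f L P Q"
  have le: "Db \<le> DL" unfolding Db_def DL_def tpP tpQ
    by (rule dpi[OF cf dP dQ ac u])
  have ge: "0 \<le> Db" unfolding Db_def tpP tpQ
    using bern_ok[OF dP dQ ac u] by (intro Df_nonneg[OF cf f1]) auto
  have GL: "G DL \<le> real n * G (Df f UNIV pX qX)" unfolding DL_def L_def P_def Q_def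
    by (rule G_lists[OF sa G0 f1 assms(7-9)])
  have "G Db \<le> G DL"
  proof (cases "DL = 0")
    case True
    then show ?thesis using le ge by simp
  next
    case False
    hence "ereal DL < Dm f" using Df_lt_Dm[OF cf f1 dP dQ ac] by (simp add: DL_def)
    moreover have "ereal Db < Dm f" using calculation le by (meson ereal_less_eq(3) le_less_trans)
    ultimately show ?thesis using le ge by (intro mono_onD[OF mo]) auto
  qed
  thus ?thesis using GL by (simp add: Db_def)
qed


end
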